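(* Let $d,k\ge 1$ be integers. Define $C_{d,k}$ as follows. If $d$ is odd, write $k=(d+1)q/2+r$ with integers $q\ge 0$ and $1\le r\le (d+1)/2$, and set $$C_{d,k}=(q+1)\left(1+\frac{r-1}{(d+1)(q+2)/2-(r-1)}\right).$$ If $d$ is even, write $k=(d+1)q+r$ with integers $q\ge 0$ and $1\le r\le d+1$, and set $$C_{d,k}=\begin{cases}(2q+1)\left(1+\dfrac{r-1}{(d+1)(q+1)-(r-1)}\right) & \text{if } 1\le r\le d/2+1,\\[2mm] (2q+3)\left(1-\dfrac{d+2-r}{(d+1)(q+1)+(d+2-r)}\right) & \text{otherwise.}\end{cases}$$ Then there is a constant $K_{d,k}$ depending only on $d$ and $k$ such that $f(n,d,k)\le C_{d,k}\,n+K_{d,k}$ for all integers $n\ge 1$.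
   Context: For integers $d\ge 1$, $n\ge 1$, $T_d(n)=\{(x_1,\dots,x_d)\in\mathbb{Z}_{\ge 0}^d : x_1+\dots+x_d\le n-1\}$. A $k$-cover of $T_d(n)$ is a finite multiset of affine hyperplanes in $\mathbb{R}^d$ such that every point of $T_d(n)$ lies in at least $k$ of them (with multiplicity). $f(n,d,k)$ is the minimum cardinality of a $k$-cover of $T_d(n)$. *)

theory Defs
  imports Main "HOL-Library.Multiset" Complex_Main
begin

text \<open>Points of R^d are modelled as functions nat => real vanishing outside {0..<d}.\<close>

definition pt :: "nat \<Rightarrow> (nat \<Rightarrow> real) \<Rightarrow> bool" where
  "pt d x \<longleftrightarrow> (\<forall>i\<ge>d. x i = 0)"

definition affine_hyperplane :: "nat \<Rightarrow> (nat \<Rightarrow> real) set \<Rightarrow> bool" where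
  "affine_hyperplane d H \<longleftrightarrow>
     (\<exists>a b. (\<exists>i<d. a i \<noteq> 0) \<and> H = {x. pt d x \<and> (\<Sum>i<d. a i * x i) = b})"

definition T :: "nat \<Rightarrow> nat \<Rightarrow> (nat \<Rightarrow> real) set" where
  "T d n = {x. \<exists>y::nat \<Rightarrow> nat. (\<forall>i\<ge>d. y i = 0) \<and> (\<Sum>i<d. y i) + 1 \<le> n
                \<and> x = (\<lambda>i. real (y i))}"

definition k_cover :: "nat \<Rightarrow> nat \<Rightarrow> nat \<Rightarrow> (nat \<Rightarrow> real) set multiset \<Rightarrow> bool" where
  "k_cover n d k M \<longleftrightarrow> (\<forall>H\<in>#M. affine_hyperplane d H) \<and>
     (\<forall>p\<in>T d n. k \<le> size (filter_mset (\<lambda>H. p \<in> H) M))"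

definition f :: "nat \<Rightarrow> nat \<Rightarrow> nat \<Rightarrow> nat" where
  "f n d k = (LEAST m. \<exists>M. k_cover n d k M \<and> size M = m)"

definition C :: "nat \<Rightarrow> nat \<Rightarrow> real" where
  "C d k =
    (if odd d then
       (let m = (d + 1) div 2; q = (k - 1) div m; r = (k - 1) mod m + 1 in
        (real q + 1) * (1 + (real r - 1) / (real (d + 1) * (real q + 2) / 2 - (real r - 1))))
     else
       (let q = (k - 1) div (d + 1); r = (k - 1) mod (d + 1) + 1 in
        if r \<le> d div 2 + 1 then
          (2 * real q + 1) * (1 + (real r - 1) / (real (d + 1) * (real q + 1) - (real r - 1)))
        else
          (2 * real q + 3) * (1 - (real d + 2 - real r) / (real (d + 1) * (real q + 1) + (real d + 2 - real r)))))"

end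

theory Submission
  imports Defs
begin

lemma card_lt_set:
  fixes N Mm z p :: nat
  defines "S \<equiv> {j\<in>{1..p}. j*N < Mm * z}"
  shows "card S * N \<le> Mm * z" and "S \<noteq> {} \<Longrightarrow> card S * N < Mm * z"
proof -
  have fin: "finite S" unfolding S_def by auto
  have strict: "card S * N < Mm * z" if ne: "S \<noteq> {}"
  proof -
    define m where "m = Max S"
    have mS: "m \<in> S" using Max_in[OF fin ne] m_def by simp
    have "S \<subseteq> {1..m}" using Max_ge[OF fin] m_def unfolding S_def by auto
    hence "card S \<le> m" using card_mono[of "{1..m}" S] by simp
    hence "card S * N \<le> m * N" by simp
    also have "m * N < Mm * z" using mS unfolding S_def by simp
    finally show ?thesis .
  qed
  show "S \<noteq> {} \<Longrightarrow> card S * N < Mm * z" by (rule strict)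
  show "card S * N \<le> Mm * z"
    using strict by (cases "S = {}") auto
qed

lemma count_lb:
  fixes z :: "nat \<Rightarrow> nat" and d p k N Mm :: nat
  assumes zs: "(\<Sum>i\<le>d. z i) = N" and kp: "k \<le> (d+1)*p" and Mm: "Mm = (d+1)*p - k + 1"
  shows "k \<le> (\<Sum>i\<le>d. card {j\<in>{1..p}. Mm * z i \<le> j*N})"
proof -
  define c where "c i = card {j\<in>{1..p}. j*N < Mm * z i}" for i
  have part: "card {j\<in>{1..p}. Mm * z i \<le> j*N} + c i = p" for i
  proof -
    have "{1..p} = {j\<in>{1..p}. Mm * z i \<le> j*N} \<union> {j\<in>{1..p}. j*N < Mm * z i}" by auto
    moreover have "{j\<in>{1..p}. Mm * z i \<le> j*N} \<inter> {j\<in>{1..p}. j*N < Mm * z i} = {}" by auto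
    ultimately have "card {1..p} = card {j\<in>{1..p}. Mm * z i \<le> j*N} + card {j\<in>{1..p}. j*N < Mm * z i}"
      by (metis (no_types, lifting) card_Un_disjoint finite_Un finite_atLeastAtMost)
    thus ?thesis unfolding c_def by simp
  qed
  have tot: "(\<Sum>i\<le>d. card {j\<in>{1..p}. Mm * z i \<le> j*N}) + (\<Sum>i\<le>d. c i) = (d+1)*p"
    using part by (simp add: sum.distrib[symmetric])
  have "(\<Sum>i\<le>d. c i) + k \<le> (d+1)*p"
  proof (cases "\<forall>i\<le>d. c i = 0")
    case True
    hence "(\<Sum>i\<le>d. c i) = 0" by simp
    thus ?thesis using kp by simp
  next
    case False
    then obtain i0 where i0: "i0 \<le> d" "c i0 \<noteq> 0" by auto
    have le: "c i * N \<le> Mm * z i" for i using card_lt_set(1) c_def by simp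
    have lt: "c i0 * N < Mm * z i0"
    proof -
      have "{j\<in>{1..p}. j*N < Mm * z i0} \<noteq> {}" using i0(2) unfolding c_def by (metis card.empty)
      thus ?thesis using card_lt_set(2)[of p N Mm "z i0"] unfolding c_def by simp
    qed
    have "(\<Sum>i\<le>d. c i * N) < (\<Sum>i\<le>d. Mm * z i)"
      by (rule sum_strict_mono_ex1) (use le lt i0 in auto)
    also have "\<dots> = Mm * N" using zs by (simp add: sum_distrib_left[symmetric])
    finally have "(\<Sum>i\<le>d. c i) * N < Mm * N" by (simp add: sum_distrib_right)
    hence "(\<Sum>i\<le>d. c i) < Mm" by (metis mult_less_cancel2)
    thus ?thesis using Mm kp by linarith
  qed
  thus ?thesis using tot by linarith
qed

definition Hy :: "nat \<Rightarrow> nat \<Rightarrow> nat \<Rightarrow> nat \<Rightarrow> (nat \<Rightarrow> real) set" where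
  "Hy d N i c = {x. pt d x \<and> (if i < d then x i = real c else (\<Sum>l<d. x l) = real N - real c)}"

lemma Hy_aff:
  assumes "1 \<le> d" shows "affine_hyperplane d (Hy d N i c)"
proof (cases "i < d")
  case True
  have "Hy d N i c = {x. pt d x \<and> (\<Sum>l<d. (\<lambda>l. if l = i then 1 else 0) l * x l) = real c}"
  proof -
    have e: "(\<Sum>l<d. (\<lambda>l. if l = i then 1 else 0) l * x l) = x i" for x :: "nat \<Rightarrow> real"
    proof -
      have "(\<Sum>l<d. (\<lambda>l. if l = i then 1 else 0) l * x l) = (\<Sum>l<d. if l = i then x l else 0)"
        by (rule sum.cong) auto
      also have "\<dots> = x i" using True by simp
      finally show ?thesis .
    qed
    show ?thesis using True unfolding Hy_def e by simp
  qed
  moreover have "\<exists>l<d. (\<lambda>l. if l = i then (1::real) else 0) l \<noteq> 0" using True by auto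
  ultimately show ?thesis unfolding affine_hyperplane_def
    by (intro exI[of _ "\<lambda>l. if l = i then (1::real) else 0"] exI[of _ "real c"]) simp
next
  case False
  have "Hy d N i c = {x. pt d x \<and> (\<Sum>l<d. (\<lambda>l. 1) l * x l) = real N - real c}"
    using False unfolding Hy_def by auto
  moreover have "\<exists>l<d. (\<lambda>l. (1::real)) l \<noteq> 0" using assms by (intro exI[of _ 0]) auto
  ultimately show ?thesis unfolding affine_hyperplane_def
    by (intro exI[of _ "\<lambda>l. (1::real)"] exI[of _ "real N - real c"]) (use assms in auto)
qed

lemma construction:
  fixes d p k n :: nat
  assumes d: "1 \<le> d" and p: "1 \<le> p" and kp: "k \<le> (d+1)*p" and n: "1 \<le> n"
  shows "real (f n d k) \<le> real ((d+1)*p*(p+1)) / (2*real ((d+1)*p - k + 1)) * real n + real ((d+1)*p)"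
proof -
  define N where "N = n - 1"
  define Mm where "Mm = (d+1)*p - k + 1"
  have Mm0: "0 < Mm" unfolding Mm_def by simp
  define Idx where "Idx = (SIGMA i:{..d}. SIGMA j:{1..p}. {..j*N div Mm})"
  have finIdx: "finite Idx" unfolding Idx_def by auto
  define F where "F = (\<lambda>(i::nat,j::nat,c::nat). Hy d N i c)"
  define Cov where "Cov = image_mset F (mset_set Idx)"
  have cover: "k_cover n d k Cov"
    unfolding k_cover_def
  proof (intro conjI ballI)
    fix H assume "H \<in># Cov"
    then show "affine_hyperplane d H" unfolding Cov_def F_def using Hy_aff[OF d] by auto
  next
    fix x assume "x \<in> T d n"
    then obtain y :: "nat \<Rightarrow> nat" where y0: "\<forall>i\<ge>d. y i = 0" and ys: "(\<Sum>i<d. y i) + 1 \<le> n"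
      and xy: "x = (\<lambda>i. real (y i))" unfolding T_def by blast
    define z where "z i = (if i < d then y i else N - (\<Sum>l<d. y l))" for i
    have zs: "(\<Sum>i\<le>d. z i) = N"
    proof -
      have "(\<Sum>i\<le>d. z i) = (\<Sum>i<d. z i) + z d"
        by (simp add: lessThan_Suc_atMost[symmetric])
      also have "(\<Sum>i<d. z i) = (\<Sum>i<d. y i)" unfolding z_def by simp
      finally show ?thesis unfolding z_def using ys N_def by simp
    qed
    have ptx: "pt d x" unfolding pt_def xy using y0 by simp
    have mem: "x \<in> Hy d N i (z i)" if "i \<le> d" for i
    proof (cases "i < d")
      case True then show ?thesis unfolding Hy_def z_def xy using ptx xy by simp
    next
      case False
      have "(\<Sum>l<d. y l) \<le> N" using ys N_def by simp
      hence "real (N - (\<Sum>l<d. y l)) = real N - (\<Sum>l<d. real (y l))"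
        by (simp add: of_nat_diff)
      then show ?thesis unfolding Hy_def z_def using False ptx xy by simp
    qed
    define P where "P = (SIGMA i:{..d}. {j\<in>{1..p}. Mm * z i \<le> j*N})"
    have cardP: "card P = (\<Sum>i\<le>d. card {j\<in>{1..p}. Mm * z i \<le> j*N})"
      unfolding P_def by (rule card_SigmaI) auto
    have "card P \<le> card {t\<in>Idx. x \<in> F t}"
    proof (rule card_inj_on_le[where f = "\<lambda>(i,j). (i,j,z i)"])
      show "inj_on (\<lambda>(i,j). (i,j,z i)) P" by (auto simp: inj_on_def)
      show "finite {t\<in>Idx. x \<in> F t}" using finIdx by simp
      show "(\<lambda>(i,j). (i,j,z i)) ` P \<subseteq> {t\<in>Idx. x \<in> F t}"
      proof
        fix t assume "t \<in> (\<lambda>(i,j). (i,j,z i)) ` P"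
        then obtain i j where t: "t = (i,j,z i)" and ij: "i \<le> d" "j \<in> {1..p}" "Mm * z i \<le> j*N"
          unfolding P_def by auto
        have "z i \<le> j*N div Mm" using ij(3) Mm0 by (simp add: less_eq_div_iff_mult_less_eq mult.commute)
        then show "t \<in> {t\<in>Idx. x \<in> F t}" using ij mem unfolding t Idx_def F_def by auto
      qed
    qed
    moreover have "size (filter_mset (\<lambda>H. x \<in> H) Cov) = card {t\<in>Idx. x \<in> F t}"
      unfolding Cov_def filter_mset_image_mset using finIdx by (simp add: filter_mset_mset_set)
    moreover have "k \<le> card P" using count_lb[OF zs kp Mm_def] cardP by simp
    ultimately show "k \<le> size (filter_mset (\<lambda>H. x \<in> H) Cov)" by linarith
  qed
  have fle: "f n d k \<le> size Cov"
    unfolding f_def by (rule Least_le) (use cover in blast)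
  have sizeCov: "size Cov = (\<Sum>i\<le>d. \<Sum>j\<in>{1..p}. (j*N div Mm + 1))"
    unfolding Cov_def Idx_def by (simp add: card_SigmaI)
  have jb: "real (j*N div Mm + 1) \<le> real j * real N / real Mm + 1" for j
  proof -
    have "real (j*N div Mm) * real Mm \<le> real (j*N)"
      by (metis of_nat_le_iff of_nat_mult times_div_less_eq_dividend mult.commute)
    hence "real (j*N div Mm) \<le> real (j*N) / real Mm" using Mm0 by (simp add: pos_le_divide_eq)
    thus ?thesis by simp
  qed
  have gauss: "(\<Sum>j\<in>{1..q}. real j) = real q * (real q + 1) / 2" for q :: nat
    by (induction q) (auto simp: field_simps)
  have "real (size Cov) = (\<Sum>i\<le>d. \<Sum>j\<in>{1..p}. real (j*N div Mm + 1))"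
    unfolding sizeCov by (simp add: algebra_simps)
  also have "\<dots> \<le> (\<Sum>i\<le>d. \<Sum>j\<in>{1..p}. (real j * real N / real Mm + 1))"
    by (intro sum_mono jb)
  also have "\<dots> = real (d+1) * ((\<Sum>j\<in>{1..p}. real j) * real N / real Mm + real p)"
    by (simp add: sum.distrib sum_divide_distrib[symmetric] sum_distrib_right[symmetric])
  also have "\<dots> = real ((d+1)*p*(p+1)) / (2*real Mm) * real N + real ((d+1)*p)"
    unfolding gauss by (simp add: field_simps)
  also have "\<dots> \<le> real ((d+1)*p*(p+1)) / (2*real Mm) * real n + real ((d+1)*p)"
    using N_def n by (intro add_right_mono mult_left_mono) auto
  finally show ?thesis using fle Mm_def
    by (smt (verit) of_nat_le_iff)
qed

lemma reduce:
  assumes d: "1 \<le> d" and p: "1 \<le> p" and kp: "k \<le> (d+1)*p"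
    and Ceq: "C d k = real ((d+1)*p*(p+1)) / (2*real ((d+1)*p - k + 1))"
  shows "\<exists>K::real. \<forall>n::nat. 1 \<le> n \<longrightarrow> real (f n d k) \<le> C d k * real n + K"
  using construction[OF d p kp] Ceq by (intro exI[of _ "real ((d+1)*p)"]) auto

theorem mainTheorem10:
  fixes d k :: nat
  assumes "1 \<le> d" and "1 \<le> k"
  shows "\<exists>K::real. \<forall>n::nat. 1 \<le> n \<longrightarrow> real (f n d k) \<le> C d k * real n + K"
proof (cases "odd d")
  case True
  define m where "m = (d + 1) div 2"
  define q where "q = (k - 1) div m"
  define r where "r = (k - 1) mod m + 1"
  have D: "d + 1 = 2*m" using True m_def by auto
  have m0: "0 < m" using D by simp
  have kq: "k = m*q + r" unfolding q_def r_def using assms(2) div_mult_mod_eq[of "k-1" m]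
    by (simp add: mult.commute)
  have r1: "1 \<le> r" and rm: "r \<le> m" unfolding r_def using m0 by (auto simp: Suc_le_eq)
  have kp: "k \<le> (d+1)*(q+1)" using kq rm D by (simp add: algebra_simps)
  have Mm: "real ((d+1)*(q+1) - k + 1) = real m * (real q + 2) - (real r - 1)"
    using kq rm D kp by (simp add: of_nat_diff algebra_simps)
  have Mpos: "real m * (real q + 2) - (real r - 1) > 0"
    using Mm by (metis of_nat_0_less_iff zero_less_Suc add.commute Suc_eq_plus1)
  have "C d k = (real q + 1) * (1 + (real r - 1) / (real (d + 1) * (real q + 2) / 2 - (real r - 1)))"
    unfolding C_def using True m_def q_def r_def by (simp add: Let_def)
  also have "\<dots> = real ((d+1)*(q+1)*(q+1+1)) / (2*real ((d+1)*(q+1) - k + 1))"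
    unfolding Mm using Mpos D
    by (simp add: field_simps)
  finally show ?thesis using reduce[OF assms(1) _ kp] by simp
next
  case False
  define D where "D = d + 1"
  define q where "q = (k - 1) div D"
  define r where "r = (k - 1) mod D + 1"
  have D0: "0 < D" using D_def by simp
  have kq: "k = D*q + r" unfolding q_def r_def using assms(2) div_mult_mod_eq[of "k-1" D]
    by (simp add: mult.commute)
  have r1: "1 \<le> r" and rD: "r \<le> D" unfolding r_def using D0 by (auto simp: Suc_le_eq)
  show ?thesis
  proof (cases "r \<le> d div 2 + 1")
    case True
    have kp: "k \<le> (d+1)*(2*q+1)" using kq rD D_def by (simp add: algebra_simps)
    have Mm: "real ((d+1)*(2*q+1) - k + 1) = real D * (real q + 1) - (real r - 1)"
      using kq rD D_def kp by (simp add: of_nat_diff algebra_simps)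
    have Mpos: "real D * (real q + 1) - (real r - 1) > 0"
      using Mm by (metis of_nat_0_less_iff zero_less_Suc add.commute Suc_eq_plus1)
    have "C d k = (2 * real q + 1) * (1 + (real r - 1) / (real (d + 1) * (real q + 1) - (real r - 1)))"
      unfolding C_def using False True D_def q_def r_def by (simp add: Let_def)
    also have "\<dots> = real ((d+1)*(2*q+1)*(2*q+1+1)) / (2*real ((d+1)*(2*q+1) - k + 1))"
      unfolding Mm using Mpos D_def
      by (simp add: field_simps)
    finally show ?thesis using reduce[OF assms(1) _ kp] by simp
  next
    case nt: False
    have kp: "k \<le> (d+1)*(2*q+2)" using kq rD D_def by (simp add: algebra_simps)
    have Mm: "real ((d+1)*(2*q+2) - k + 1) = real D * (real q + 1) + (real d + 2 - real r)"
      using kq rD D_def kp by (simp add: of_nat_diff algebra_simps)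
    have Mpos: "real D * (real q + 1) + (real d + 2 - real r) > 0"
      using Mm by (metis of_nat_0_less_iff zero_less_Suc add.commute Suc_eq_plus1)
    have "C d k = (2 * real q + 3) * (1 - (real d + 2 - real r) / (real (d + 1) * (real q + 1) + (real d + 2 - real r)))"
      unfolding C_def using False nt D_def q_def r_def by (simp add: Let_def)
    also have "\<dots> = real ((d+1)*(2*q+2)*(2*q+2+1)) / (2*real ((d+1)*(2*q+2) - k + 1))"
      unfolding Mm using Mpos D_def
      by (simp add: field_simps)
    finally show ?thesis using reduce[OF assms(1) _ kp] by simp
  qed
qed

end
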